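(* Let $G$ be a group with neutral element $e$, $R$ a unital ring, and $\alpha=(\{D_g\}_{g\in G},\{\alpha_g\}_{g\in G})$ a unital partial action of $G$ on $R$, with $1_g$ the multiplicative identity of $D_g$. Assume (a) $D_gD_h=(0)$ for all $g,h\in G$ with $g\ne h$ and $g,h\ne e$, and (b) the set $\{1_g\mid g\in G\}$ is finite. Then for every normal subgroup $N$ of $G$, the induced $G/N$-grading of the partial skew group ring $R\star_\alpha G=\bigoplus_{g\in G}D_g\delta_g$ makes it an epsilon-crossed product.
   Context: A unital partial action of $G$ on $R$ consists of unital ideals $D_g$ of $R$ and ring isomorphisms $\alpha_g\colon D_{g^{-1}}\to D_g$ such that $D_e=R$, $\alpha_e=\mathrm{id}_R$, $\alpha_g(D_{g^{-1}}D_h)=D_gD_{gh}$ for all $g,h$, and $\alpha_g(\alpha_h(x))=\alpha_{gh}(x)$ for all $x\in D_{h^{-1}}D_{(gh)^{-1}}$. The partial skew group ring $R\star_\alpha G=\bigoplus_gD_g\delta_g$ ($\delta_g$ formal symbols) has multiplication $(a_g\delta_g)(b_h\delta_h)=a_g\alpha_g(b_h1_{g^{-1}})\delta_{gh}$, and is $G$-graded by $\{D_g\delta_g\}$. The induced $G/N$-grading is $S_C=\bigoplus_{g\in C}D_g\delta_g$. A grading $\{T_h\}_{h\in H}$ is epsilon-strong if $T_hT_{h^{-1}}T_h=T_h$ for all $h$ ($AB$ = finite sums of products) and each $T_hT_{h^{-1}}$ has a multiplicative identity $\epsilon_h$. An element $s\in T_h$ is epsilon-invertible if there is $t\in T_{h^{-1}}$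 with $st=\epsilon_h$ and $ts=\epsilon_{h^{-1}}$. An epsilon-crossed product is an epsilon-strongly graded ring in which every $T_h$ contains an epsilon-invertible element. *)

theory Defs
  imports "HOL-Algebra.Algebra"
begin

inductive_set sum_prods :: "('a, 'm) ring_scheme \<Rightarrow> 'a set \<Rightarrow> 'a set \<Rightarrow> 'a set"
  for S :: "('a, 'm) ring_scheme" and A B :: "'a set" where
  sp_zero: "\<zero>\<^bsub>S\<^esub> \<in> sum_prods S A B"
| sp_prod: "a \<in> A \<Longrightarrow> b \<in> B \<Longrightarrow> a \<otimes>\<^bsub>S\<^esub> b \<in> sum_prods S A B"
| sp_add: "x \<in> sum_prods S A B \<Longrightarrow> y \<in> sum_prods S A B \<Longrightarrow> x \<oplus>\<^bsub>S\<^esub> y \<in> sum_prods S A B"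

definition is_mult_identity :: "('a, 'm) ring_scheme \<Rightarrow> 'a set \<Rightarrow> 'a \<Rightarrow> bool" where
  "is_mult_identity S A u \<longleftrightarrow> u \<in> A \<and> (\<forall>x\<in>A. u \<otimes>\<^bsub>S\<^esub> x = x \<and> x \<otimes>\<^bsub>S\<^esub> u = x)"

definition mult_identity :: "('a, 'm) ring_scheme \<Rightarrow> 'a set \<Rightarrow> 'a" where
  "mult_identity S A = (THE u. is_mult_identity S A u)"

definition unital_partial_action ::
  "('g, 'b) monoid_scheme \<Rightarrow> ('r, 'c) ring_scheme \<Rightarrow> ('g \<Rightarrow> 'r set) \<Rightarrow> ('g \<Rightarrow> 'r \<Rightarrow> 'r) \<Rightarrow> bool" where
  "unital_partial_action G R D \<alpha> \<longleftrightarrow>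
     (\<forall>g\<in>carrier G. ideal (D g) R \<and> (\<exists>u. is_mult_identity R (D g) u)) \<and>
     (\<forall>g\<in>carrier G. bij_betw (\<alpha> g) (D (inv\<^bsub>G\<^esub> g)) (D g) \<and>
        (\<forall>x\<in>D (inv\<^bsub>G\<^esub> g). \<forall>y\<in>D (inv\<^bsub>G\<^esub> g).
            \<alpha> g (x \<oplus>\<^bsub>R\<^esub> y) = \<alpha> g x \<oplus>\<^bsub>R\<^esub> \<alpha> g y \<and>
            \<alpha> g (x \<otimes>\<^bsub>R\<^esub> y) = \<alpha> g x \<otimes>\<^bsub>R\<^esub> \<alpha> g y)) \<and>
     D \<one>\<^bsub>G\<^esub> = carrier R \<and>
     (\<forall>x\<in>carrier R. \<alpha> \<one>\<^bsub>G\<^esub> x = x) \<and>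
     (\<forall>g\<in>carrier G. \<forall>h\<in>carrier G.
        \<alpha> g ` sum_prods R (D (inv\<^bsub>G\<^esub> g)) (D h) = sum_prods R (D g) (D (g \<otimes>\<^bsub>G\<^esub> h))) \<and>
     (\<forall>g\<in>carrier G. \<forall>h\<in>carrier G.
        \<forall>x\<in>sum_prods R (D (inv\<^bsub>G\<^esub> h)) (D (inv\<^bsub>G\<^esub> (g \<otimes>\<^bsub>G\<^esub> h))).
          \<alpha> g (\<alpha> h x) = \<alpha> (g \<otimes>\<^bsub>G\<^esub> h) x)"

definition unit_of_ideal :: "('r, 'c) ring_scheme \<Rightarrow> ('g \<Rightarrow> 'r set) \<Rightarrow> 'g \<Rightarrow> 'r" where
  "unit_of_ideal R D g = mult_identity R (D g)"

text \<open>Elements of the direct sum of the D_g delta_g are represented as finitely supported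
  functions f on carrier G with f g in D g (and f = 0 outside carrier G).\<close>

definition skew_support :: "('g, 'b) monoid_scheme \<Rightarrow> ('r, 'c) ring_scheme \<Rightarrow> ('g \<Rightarrow> 'r) \<Rightarrow> 'g set" where
  "skew_support G R f = {g \<in> carrier G. f g \<noteq> \<zero>\<^bsub>R\<^esub>}"

definition skew_mult ::
  "('r, 'c) ring_scheme \<Rightarrow> ('g, 'b) monoid_scheme \<Rightarrow> ('g \<Rightarrow> 'r set) \<Rightarrow> ('g \<Rightarrow> 'r \<Rightarrow> 'r)
     \<Rightarrow> ('g \<Rightarrow> 'r) \<Rightarrow> ('g \<Rightarrow> 'r) \<Rightarrow> 'g \<Rightarrow> 'r" where
  "skew_mult R G D \<alpha> f h x =
     (if x \<in> carrier G then
        (\<Oplus>\<^bsub>R\<^esub> g\<in>skew_support G R f.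
           f g \<otimes>\<^bsub>R\<^esub> \<alpha> g (h (inv\<^bsub>G\<^esub> g \<otimes>\<^bsub>G\<^esub> x) \<otimes>\<^bsub>R\<^esub> unit_of_ideal R D (inv\<^bsub>G\<^esub> g)))
      else \<zero>\<^bsub>R\<^esub>)"

definition partial_skew_group_ring ::
  "('r, 'c) ring_scheme \<Rightarrow> ('g, 'b) monoid_scheme \<Rightarrow> ('g \<Rightarrow> 'r set) \<Rightarrow> ('g \<Rightarrow> 'r \<Rightarrow> 'r)
     \<Rightarrow> ('g \<Rightarrow> 'r) ring" where
  "partial_skew_group_ring R G D \<alpha> =
    \<lparr> carrier = {f. (\<forall>g. g \<notin> carrier G \<longrightarrow> f g = \<zero>\<^bsub>R\<^esub>) \<and> (\<forall>g\<in>carrier G. f g \<in> D g)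
                    \<and> finite (skew_support G R f)},
      monoid.mult = skew_mult R G D \<alpha>,
      one = (\<lambda>g. if g = \<one>\<^bsub>G\<^esub> then \<one>\<^bsub>R\<^esub> else \<zero>\<^bsub>R\<^esub>),
      ring.zero = (\<lambda>g. \<zero>\<^bsub>R\<^esub>),
      ring.add = (\<lambda>f h g. f g \<oplus>\<^bsub>R\<^esub> h g) \<rparr>"

definition induced_quotient_component ::
  "('r, 'c) ring_scheme \<Rightarrow> ('g, 'b) monoid_scheme \<Rightarrow> ('g \<Rightarrow> 'r set) \<Rightarrow> ('g \<Rightarrow> 'r \<Rightarrow> 'r)
     \<Rightarrow> 'g set \<Rightarrow> ('g \<Rightarrow> 'r) set" where
  "induced_quotient_component R G D \<alpha> C =
     {f \<in> carrier (partial_skew_group_ring R G D \<alpha>). skew_support G R f \<subseteq> C}"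

definition is_grading :: "('s, 'm) ring_scheme \<Rightarrow> ('h, 'b) monoid_scheme \<Rightarrow> ('h \<Rightarrow> 's set) \<Rightarrow> bool" where
  "is_grading S H T \<longleftrightarrow>
     (\<forall>h\<in>carrier H. T h \<subseteq> carrier S \<and> \<zero>\<^bsub>S\<^esub> \<in> T h \<and>
        (\<forall>x\<in>T h. \<forall>y\<in>T h. x \<oplus>\<^bsub>S\<^esub> y \<in> T h \<and> \<ominus>\<^bsub>S\<^esub> x \<in> T h)) \<and>
     (\<forall>g\<in>carrier H. \<forall>h\<in>carrier H. \<forall>x\<in>T g. \<forall>y\<in>T h. x \<otimes>\<^bsub>S\<^esub> y \<in> T (g \<otimes>\<^bsub>H\<^esub> h)) \<and>
     (\<forall>s\<in>carrier S. \<exists>!x. (\<forall>h. h \<notin> carrier H \<longrightarrow> x h = \<zero>\<^bsub>S\<^esub>) \<and> (\<forall>h\<in>carrier H. x h \<in> T h) \<and>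
        finite {h \<in> carrier H. x h \<noteq> \<zero>\<^bsub>S\<^esub>} \<and>
        s = (\<Oplus>\<^bsub>S\<^esub> h\<in>{h \<in> carrier H. x h \<noteq> \<zero>\<^bsub>S\<^esub>}. x h))"

definition epsilon_strong :: "('s, 'm) ring_scheme \<Rightarrow> ('h, 'b) monoid_scheme \<Rightarrow> ('h \<Rightarrow> 's set) \<Rightarrow> bool" where
  "epsilon_strong S H T \<longleftrightarrow> is_grading S H T \<and>
     (\<forall>h\<in>carrier H.
        sum_prods S (sum_prods S (T h) (T (inv\<^bsub>H\<^esub> h))) (T h) = T h \<and>
        (\<exists>u. is_mult_identity S (sum_prods S (T h) (T (inv\<^bsub>H\<^esub> h))) u))"

definition epsilon_unit :: "('s, 'm) ring_scheme \<Rightarrow> ('h, 'b) monoid_scheme \<Rightarrow> ('h \<Rightarrow> 's set) \<Rightarrow> 'h \<Rightarrow> 's" where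
  "epsilon_unit S H T h = mult_identity S (sum_prods S (T h) (T (inv\<^bsub>H\<^esub> h)))"

definition epsilon_invertible :: "('s, 'm) ring_scheme \<Rightarrow> ('h, 'b) monoid_scheme \<Rightarrow> ('h \<Rightarrow> 's set) \<Rightarrow> 'h \<Rightarrow> 's \<Rightarrow> bool" where
  "epsilon_invertible S H T h s \<longleftrightarrow> s \<in> T h \<and>
     (\<exists>t\<in>T (inv\<^bsub>H\<^esub> h). s \<otimes>\<^bsub>S\<^esub> t = epsilon_unit S H T h \<and>
                         t \<otimes>\<^bsub>S\<^esub> s = epsilon_unit S H T (inv\<^bsub>H\<^esub> h))"

definition epsilon_crossed_product :: "('s, 'm) ring_scheme \<Rightarrow> ('h, 'b) monoid_scheme \<Rightarrow> ('h \<Rightarrow> 's set) \<Rightarrow> bool" where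
  "epsilon_crossed_product S H T \<longleftrightarrow> epsilon_strong S H T \<and>
     (\<forall>h\<in>carrier H. \<exists>s. epsilon_invertible S H T h s)"

end

theory Submission
  imports Defs
begin


lemma mi_unique:
  assumes "is_mult_identity S A u" "is_mult_identity S A v" shows "u = v"
proof -
  have "u \<in> A" "\<forall>x\<in>A. u \<otimes>\<^bsub>S\<^esub> x = x \<and> x \<otimes>\<^bsub>S\<^esub> u = x"
    using assms(1) unfolding is_mult_identity_def by blast+
  moreover have "v \<in> A" "\<forall>x\<in>A. v \<otimes>\<^bsub>S\<^esub> x = x \<and> x \<otimes>\<^bsub>S\<^esub> v = x"
    using assms(2) unfolding is_mult_identity_def by blast+
  ultimately have "u \<otimes>\<^bsub>S\<^esub> v = v" "u \<otimes>\<^bsub>S\<^esub> v = u" by blast+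
  then show ?thesis by simp
qed

lemma mi_eq: assumes "is_mult_identity S A u" shows "mult_identity S A = u"
  unfolding mult_identity_def
proof (rule the_equality)
  show "is_mult_identity S A u" by fact
  fix x assume "is_mult_identity S A x" then show "x = u" using mi_unique[OF _ assms] by blast
qed

locale psg = G: group G + R: ring R
  for G :: "('g, 'b) monoid_scheme" and R :: "('r, 'c) ring_scheme" +
  fixes D :: "'g \<Rightarrow> 'r set" and \<alpha> :: "'g \<Rightarrow> 'r \<Rightarrow> 'r"
  assumes upa: "unital_partial_action G R D \<alpha>"
    and orth: "\<forall>g\<in>carrier G. \<forall>h\<in>carrier G. g \<noteq> h \<and> g \<noteq> \<one>\<^bsub>G\<^esub> \<and> h \<noteq> \<one>\<^bsub>G\<^esub>
           \<longrightarrow> sum_prods R (D g) (D h) = {\<zero>\<^bsub>R\<^esub>}"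
    and fin: "finite (unit_of_ideal R D ` carrier G)"
begin

abbreviation "u1 \<equiv> unit_of_ideal R D"

lemmas U = upa[unfolded unital_partial_action_def]
lemmas U1 = U[THEN conjunct1]
lemmas U2 = U[THEN conjunct2, THEN conjunct1]
lemmas U3 = U[THEN conjunct2, THEN conjunct2, THEN conjunct1]
lemmas U4 = U[THEN conjunct2, THEN conjunct2, THEN conjunct2, THEN conjunct1]
lemmas U5 = U[THEN conjunct2, THEN conjunct2, THEN conjunct2, THEN conjunct2, THEN conjunct1]

lemma idl: "g \<in> carrier G \<Longrightarrow> ideal (D g) R"
  using U1 by blast

lemma D_sub: "g \<in> carrier G \<Longrightarrow> D g \<subseteq> carrier R"
  using additive_subgroup.a_subset[OF ideal.axioms(1)[OF idl]] .

lemma D_zero: "g \<in> carrier G \<Longrightarrow> \<zero>\<^bsub>R\<^esub> \<in> D g"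
  using additive_subgroup.zero_closed[OF ideal.axioms(1)[OF idl]] .

lemma D_add: "g \<in> carrier G \<Longrightarrow> x \<in> D g \<Longrightarrow> y \<in> D g \<Longrightarrow> x \<oplus>\<^bsub>R\<^esub> y \<in> D g"
  by (rule additive_subgroup.a_closed[OF ideal.axioms(1)[OF idl]])

lemma D_neg: "g \<in> carrier G \<Longrightarrow> x \<in> D g \<Longrightarrow> \<ominus>\<^bsub>R\<^esub> x \<in> D g"
  by (rule additive_subgroup.a_inv_closed[OF ideal.axioms(1)[OF idl]])

lemma D_lmult: "g \<in> carrier G \<Longrightarrow> x \<in> D g \<Longrightarrow> r \<in> carrier R \<Longrightarrow> r \<otimes>\<^bsub>R\<^esub> x \<in> D g"
  by (rule ideal.I_l_closed[OF idl])

lemma D_rmult: "g \<in> carrier G \<Longrightarrow> x \<in> D g \<Longrightarrow> r \<in> carrier R \<Longrightarrow> x \<otimes>\<^bsub>R\<^esub> r \<in> D g"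
  by (rule ideal.I_r_closed[OF idl])

lemma D_one: "D \<one>\<^bsub>G\<^esub> = carrier R"
  using U3 .

lemma alpha_one: "x \<in> carrier R \<Longrightarrow> \<alpha> \<one>\<^bsub>G\<^esub> x = x"
  using U4 by blast

lemma u1_mi: assumes "g \<in> carrier G" shows "is_mult_identity R (D g) (u1 g)"
proof -
  obtain u where "is_mult_identity R (D g) u"
    using U1 assms by blast
  moreover then have "mult_identity R (D g) = u" by (rule mi_eq)
  ultimately show ?thesis unfolding unit_of_ideal_def by simp
qed

lemma u1_in: "g \<in> carrier G \<Longrightarrow> u1 g \<in> D g"
  using u1_mi unfolding is_mult_identity_def by blast

lemma u1_carr: "g \<in> carrier G \<Longrightarrow> u1 g \<in> carrier R"
  using u1_in D_sub by blast

lemma u1_l: "g \<in> carrier G \<Longrightarrow> x \<in> D g \<Longrightarrow> u1 g \<otimes>\<^bsub>R\<^esub> x = x"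
  using u1_mi unfolding is_mult_identity_def by blast

lemma u1_r: "g \<in> carrier G \<Longrightarrow> x \<in> D g \<Longrightarrow> x \<otimes>\<^bsub>R\<^esub> u1 g = x"
  using u1_mi unfolding is_mult_identity_def by blast

lemma u1_one: "u1 \<one>\<^bsub>G\<^esub> = \<one>\<^bsub>R\<^esub>"
proof -
  have "is_mult_identity R (D \<one>\<^bsub>G\<^esub>) \<one>\<^bsub>R\<^esub>"
    unfolding is_mult_identity_def D_one by auto
  then show ?thesis using u1_mi[of "\<one>\<^bsub>G\<^esub>"] mi_unique[of R "D \<one>\<^bsub>G\<^esub>"] by simp
qed

lemma alpha_bij: "g \<in> carrier G \<Longrightarrow> bij_betw (\<alpha> g) (D (inv\<^bsub>G\<^esub> g)) (D g)"
  using U2 by blast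

lemma alpha_in: "g \<in> carrier G \<Longrightarrow> x \<in> D (inv\<^bsub>G\<^esub> g) \<Longrightarrow> \<alpha> g x \<in> D g"
  using alpha_bij bij_betwE by blast

lemma alpha_add: "g \<in> carrier G \<Longrightarrow> x \<in> D (inv\<^bsub>G\<^esub> g) \<Longrightarrow> y \<in> D (inv\<^bsub>G\<^esub> g) \<Longrightarrow>
   \<alpha> g (x \<oplus>\<^bsub>R\<^esub> y) = \<alpha> g x \<oplus>\<^bsub>R\<^esub> \<alpha> g y"
  using U2 by blast

lemma alpha_mult: "g \<in> carrier G \<Longrightarrow> x \<in> D (inv\<^bsub>G\<^esub> g) \<Longrightarrow> y \<in> D (inv\<^bsub>G\<^esub> g) \<Longrightarrow>
   \<alpha> g (x \<otimes>\<^bsub>R\<^esub> y) = \<alpha> g x \<otimes>\<^bsub>R\<^esub> \<alpha> g y"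
  using U2 by blast

lemma alpha_sp: "g \<in> carrier G \<Longrightarrow> h \<in> carrier G \<Longrightarrow>
   \<alpha> g ` sum_prods R (D (inv\<^bsub>G\<^esub> g)) (D h) = sum_prods R (D g) (D (g \<otimes>\<^bsub>G\<^esub> h))"
  using U5 by blast

lemma alpha_zero: assumes "g \<in> carrier G" shows "\<alpha> g \<zero>\<^bsub>R\<^esub> = \<zero>\<^bsub>R\<^esub>"
proof -
  have gi: "inv\<^bsub>G\<^esub> g \<in> carrier G" using assms by simp
  have z: "\<zero>\<^bsub>R\<^esub> \<in> D (inv\<^bsub>G\<^esub> g)" using D_zero gi by blast
  have c: "\<alpha> g \<zero>\<^bsub>R\<^esub> \<in> carrier R" using alpha_in[OF assms z] D_sub assms by blast
  have "\<alpha> g \<zero>\<^bsub>R\<^esub> = \<alpha> g \<zero>\<^bsub>R\<^esub> \<oplus>\<^bsub>R\<^esub> \<alpha> g \<zero>\<^bsub>R\<^esub>"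
    using alpha_add[OF assms z z] by simp
  moreover have "(\<alpha> g \<zero>\<^bsub>R\<^esub> = \<alpha> g \<zero>\<^bsub>R\<^esub> \<oplus>\<^bsub>R\<^esub> \<alpha> g \<zero>\<^bsub>R\<^esub>) = (\<alpha> g \<zero>\<^bsub>R\<^esub> = \<zero>\<^bsub>R\<^esub>)"
    by (rule R.add.l_cancel_one'[OF c c])
  ultimately show ?thesis by blast
qed

lemma alpha_u1: assumes "g \<in> carrier G" shows "\<alpha> g (u1 (inv\<^bsub>G\<^esub> g)) = u1 g"
proof -
  have gi: "inv\<^bsub>G\<^esub> g \<in> carrier G" using assms by simp
  have "is_mult_identity R (D g) (\<alpha> g (u1 (inv\<^bsub>G\<^esub> g)))"
    unfolding is_mult_identity_def
  proof (intro conjI ballI)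
    show "\<alpha> g (u1 (inv\<^bsub>G\<^esub> g)) \<in> D g" using alpha_in assms u1_in gi by blast
    fix x assume x: "x \<in> D g"
    then obtain y where y: "y \<in> D (inv\<^bsub>G\<^esub> g)" "x = \<alpha> g y"
      using alpha_bij[OF assms] unfolding bij_betw_def by blast
    show "\<alpha> g (u1 (inv\<^bsub>G\<^esub> g)) \<otimes>\<^bsub>R\<^esub> x = x"
      using y alpha_mult[OF assms u1_in[OF gi] y(1)] u1_l[OF gi y(1)] by simp
    show "x \<otimes>\<^bsub>R\<^esub> \<alpha> g (u1 (inv\<^bsub>G\<^esub> g)) = x"
      using y alpha_mult[OF assms y(1) u1_in[OF gi]] u1_r[OF gi y(1)] by simp
  qed
  then show ?thesis using u1_mi[OF assms] by (rule mi_unique)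
qed

lemma sp_sub_right: assumes "h \<in> carrier G" "A \<subseteq> carrier R" shows "sum_prods R A (D h) \<subseteq> D h"
proof
  fix x assume "x \<in> sum_prods R A (D h)"
  then show "x \<in> D h"
  proof induct
    case sp_zero then show ?case using D_zero assms by blast
  next
    case (sp_prod a b) then show ?case using D_lmult assms by blast
  next
    case (sp_add x y) then show ?case using D_add assms by blast
  qed
qed

lemma orth0: assumes "g \<in> carrier G" "h \<in> carrier G" "g \<noteq> h" "g \<noteq> \<one>\<^bsub>G\<^esub>" "h \<noteq> \<one>\<^bsub>G\<^esub>"
  "a \<in> D g" "b \<in> D h" shows "a \<otimes>\<^bsub>R\<^esub> b = \<zero>\<^bsub>R\<^esub>"
proof -
  have "a \<otimes>\<^bsub>R\<^esub> b \<in> sum_prods R (D g) (D h)" using assms by (intro sp_prod)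
  then show ?thesis using orth assms by blast
qed

lemma finsum_pred:
  assumes "finite A" "f \<in> A \<rightarrow> carrier R" "P \<zero>\<^bsub>R\<^esub>"
    "\<And>x y. x \<in> carrier R \<Longrightarrow> y \<in> carrier R \<Longrightarrow> P x \<Longrightarrow> P y \<Longrightarrow> P (x \<oplus>\<^bsub>R\<^esub> y)"
    "\<And>i. i \<in> A \<Longrightarrow> P (f i)"
  shows "P (finsum R f A)"
  using assms(1,2,5)
proof (induction A rule: finite_induct)
  case empty then show ?case using assms(3) by simp
next
  case (insert a A)
  have fa: "f a \<in> carrier R" using insert.prems(1) by blast
  have fA: "f \<in> A \<rightarrow> carrier R" using insert.prems(1) by blast
  have e: "finsum R f (insert a A) = f a \<oplus>\<^bsub>R\<^esub> finsum R f A"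
    using R.finsum_insert[OF insert.hyps(1,2) fA fa] .
  have c: "finsum R f A \<in> carrier R" using R.finsum_closed[OF fA] .
  have p1: "P (f a)" using insert.prems(2) by blast
  have p2: "P (finsum R f A)" using insert.IH fA insert.prems(2) by blast
  show ?case unfolding e using assms(4)[OF fa c p1 p2] .
qed

lemma finsum_single:
  assumes "finite A" "f \<in> A \<rightarrow> carrier R" "\<And>j. j \<in> A \<Longrightarrow> j \<noteq> i \<Longrightarrow> f j = \<zero>\<^bsub>R\<^esub>"
  shows "finsum R f A = (if i \<in> A then f i else \<zero>\<^bsub>R\<^esub>)"
proof (cases "i \<in> A")
  case True
  have "finsum R f A = finsum R (\<lambda>j. if i = j then f j else \<zero>\<^bsub>R\<^esub>) A"
  proof (rule R.finsum_cong')
    show "(\<lambda>j. if i = j then f j else \<zero>\<^bsub>R\<^esub>) \<in> A \<rightarrow> carrier R"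
      using assms(2) by (simp add: Pi_def)
    fix j assume "j \<in> A" then show "f j = (if i = j then f j else \<zero>\<^bsub>R\<^esub>)"
      using assms(3) by simp
  qed simp
  also have "\<dots> = f i" using R.finsum_singleton[OF True assms(1,2)] .
  finally show ?thesis using True by simp
next
  case False
  have "finsum R f A = finsum R (\<lambda>j. \<zero>\<^bsub>R\<^esub>) A"
  proof (rule R.finsum_cong')
    fix j assume "j \<in> A" then show "f j = \<zero>\<^bsub>R\<^esub>"
      using assms(3) False by blast
  qed simp_all
  then show ?thesis using False by simp
qed

end



context psg begin

abbreviation "S \<equiv> partial_skew_group_ring R G D \<alpha>"
abbreviation "supp \<equiv> skew_support G R"
definition "mn r = (\<lambda>x. if x = \<one>\<^bsub>G\<^esub> then r else \<zero>\<^bsub>R\<^esub>)"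
definition "trm f h x g = f g \<otimes>\<^bsub>R\<^esub> \<alpha> g (h (inv\<^bsub>G\<^esub> g \<otimes>\<^bsub>G\<^esub> x) \<otimes>\<^bsub>R\<^esub> u1 (inv\<^bsub>G\<^esub> g))"

lemma CS_iff: "f \<in> carrier S \<longleftrightarrow> (\<forall>g. g \<notin> carrier G \<longrightarrow> f g = \<zero>\<^bsub>R\<^esub>) \<and> (\<forall>g\<in>carrier G. f g \<in> D g)
                    \<and> finite (supp f)"
  by (simp add: partial_skew_group_ring_def)

lemma mult_S: "f \<otimes>\<^bsub>S\<^esub> h = skew_mult R G D \<alpha> f h"
  by (simp add: partial_skew_group_ring_def)
lemma add_S: "f \<oplus>\<^bsub>S\<^esub> h = (\<lambda>g. f g \<oplus>\<^bsub>R\<^esub> h g)"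
  by (simp add: partial_skew_group_ring_def)
lemma zero_S: "\<zero>\<^bsub>S\<^esub> = (\<lambda>g. \<zero>\<^bsub>R\<^esub>)"
  by (simp add: partial_skew_group_ring_def)
lemma one_S: "\<one>\<^bsub>S\<^esub> = mn \<one>\<^bsub>R\<^esub>"
  by (simp add: partial_skew_group_ring_def mn_def)

lemma CS_out: "f \<in> carrier S \<Longrightarrow> g \<notin> carrier G \<Longrightarrow> f g = \<zero>\<^bsub>R\<^esub>"
  using CS_iff by blast
lemma CS_D: "f \<in> carrier S \<Longrightarrow> g \<in> carrier G \<Longrightarrow> f g \<in> D g"
  using CS_iff by blast
lemma CS_fin: "f \<in> carrier S \<Longrightarrow> finite (supp f)"
  using CS_iff by blast
lemma CS_val: "f \<in> carrier S \<Longrightarrow> f g \<in> carrier R"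
proof (cases "g \<in> carrier G")
  case True
  assume "f \<in> carrier S" then show ?thesis using CS_D[OF _ True] D_sub[OF True] by blast
next
  case False
  assume f: "f \<in> carrier S" then show ?thesis using CS_out[OF f False] by simp
qed
lemma supp_iff: "x \<in> supp f \<longleftrightarrow> x \<in> carrier G \<and> f x \<noteq> \<zero>\<^bsub>R\<^esub>"
  by (simp add: skew_support_def)
lemma supp_sub: "supp f \<subseteq> carrier G"
  by (auto simp add: skew_support_def)

lemma prod_val: "x \<in> carrier G \<Longrightarrow> (f \<otimes>\<^bsub>S\<^esub> h) x = finsum R (trm f h x) (supp f)"
  unfolding mult_S skew_mult_def trm_def[abs_def] by simp
lemma prod_out: "x \<notin> carrier G \<Longrightarrow> (f \<otimes>\<^bsub>S\<^esub> h) x = \<zero>\<^bsub>R\<^esub>"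
  by (simp add: mult_S skew_mult_def)

lemma trm_in:
  assumes f: "f \<in> carrier S" and h: "h \<in> carrier S" and g: "g \<in> carrier G" and x: "x \<in> carrier G"
  shows "trm f h x g \<in> D x"
proof -
  define k where "k = inv\<^bsub>G\<^esub> g \<otimes>\<^bsub>G\<^esub> x"
  define gi where "gi = inv\<^bsub>G\<^esub> g"
  have k: "k \<in> carrier G" unfolding k_def using g x by simp
  have gi: "gi \<in> carrier G" unfolding gi_def using g by simp
  have gk: "g \<otimes>\<^bsub>G\<^esub> k = x" unfolding k_def using g x
    by (simp add: G.m_assoc[symmetric])
  define y where "y = h k \<otimes>\<^bsub>R\<^esub> u1 gi"
  have hk: "h k \<in> D k" using CS_D[OF h k] .
  have hkc: "h k \<in> carrier R" using CS_val[OF h] .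
  have y1: "y \<in> D gi" unfolding y_def by (rule D_lmult[OF gi u1_in[OF gi] hkc])
  have y2: "y \<in> D k" unfolding y_def by (rule D_rmult[OF k hk u1_carr[OF gi]])
  have "u1 gi \<otimes>\<^bsub>R\<^esub> y \<in> sum_prods R (D gi) (D k)"
    by (rule sp_prod[OF u1_in[OF gi] y2])
  then have "y \<in> sum_prods R (D gi) (D k)" using u1_l[OF gi y1] by simp
  then have "\<alpha> g y \<in> \<alpha> g ` sum_prods R (D (inv\<^bsub>G\<^esub> g)) (D k)" unfolding gi_def by blast
  then have "\<alpha> g y \<in> sum_prods R (D g) (D x)" using alpha_sp[OF g k] gk by simp
  then have "\<alpha> g y \<in> D x" using sp_sub_right[OF x D_sub[OF g]] by blast
  then have "f g \<otimes>\<^bsub>R\<^esub> \<alpha> g y \<in> D x" using D_lmult[OF x _ CS_val[OF f]] by blast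
  then show ?thesis unfolding trm_def y_def gi_def k_def .
qed

lemma trm_zero:
  assumes f: "f \<in> carrier S" and g: "g \<in> carrier G" and hz: "h (inv\<^bsub>G\<^esub> g \<otimes>\<^bsub>G\<^esub> x) = \<zero>\<^bsub>R\<^esub>"
  shows "trm f h x g = \<zero>\<^bsub>R\<^esub>"
proof -
  have gi: "inv\<^bsub>G\<^esub> g \<in> carrier G" using g by simp
  have "\<zero>\<^bsub>R\<^esub> \<otimes>\<^bsub>R\<^esub> u1 (inv\<^bsub>G\<^esub> g) = \<zero>\<^bsub>R\<^esub>" using u1_carr[OF gi] by simp
  then show ?thesis unfolding trm_def hz using alpha_zero[OF g] CS_val[OF f] by simp
qed

lemma prod_D:
  assumes f: "f \<in> carrier S" and h: "h \<in> carrier S" and x: "x \<in> carrier G"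
  shows "(f \<otimes>\<^bsub>S\<^esub> h) x \<in> D x"
proof -
  have tc: "trm f h x \<in> supp f \<rightarrow> carrier R"
    using trm_in[OF f h _ x] supp_sub D_sub[OF x] by blast
  show ?thesis unfolding prod_val[OF x]
    by (rule finsum_pred[OF CS_fin[OF f] tc]) (use D_zero[OF x] D_add[OF x] trm_in[OF f h _ x] supp_sub in blast)+
qed

lemma prod_supp:
  assumes f: "f \<in> carrier S" and h: "h \<in> carrier S" and x: "x \<in> supp (f \<otimes>\<^bsub>S\<^esub> h)"
  shows "\<exists>g\<in>supp f. \<exists>k\<in>supp h. x = g \<otimes>\<^bsub>G\<^esub> k"
proof (rule ccontr)
  assume na: "\<not> ?thesis"
  have xc: "x \<in> carrier G" using x supp_iff by blast
  have "finsum R (trm f h x) (supp f) = finsum R (\<lambda>g. \<zero>\<^bsub>R\<^esub>) (supp f)"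
  proof (rule R.finsum_cong')
    fix g assume g: "g \<in> supp f"
    have gc: "g \<in> carrier G" using g supp_iff by blast
    define k where "k = inv\<^bsub>G\<^esub> g \<otimes>\<^bsub>G\<^esub> x"
    have kc: "k \<in> carrier G" unfolding k_def using gc xc by simp
    have gk: "g \<otimes>\<^bsub>G\<^esub> k = x" unfolding k_def using gc xc
      by (simp add: G.m_assoc[symmetric])
    have "h k = \<zero>\<^bsub>R\<^esub>"
    proof (rule ccontr)
      assume "h k \<noteq> \<zero>\<^bsub>R\<^esub>"
      then have "k \<in> supp h" using kc supp_iff by blast
      then show False using na g gk by blast
    qed
    then show "trm f h x g = \<zero>\<^bsub>R\<^esub>" using trm_zero[OF f gc] unfolding k_def by blast
  qed simp_all
  then have "(f \<otimes>\<^bsub>S\<^esub> h) x = \<zero>\<^bsub>R\<^esub>" unfolding prod_val[OF xc] by simp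
  then show False using x supp_iff by blast
qed

lemma prod_closed:
  assumes f: "f \<in> carrier S" and h: "h \<in> carrier S"
  shows "f \<otimes>\<^bsub>S\<^esub> h \<in> carrier S"
proof -
  have "supp (f \<otimes>\<^bsub>S\<^esub> h) \<subseteq> (\<lambda>(g, k). g \<otimes>\<^bsub>G\<^esub> k) ` (supp f \<times> supp h)"
    using prod_supp[OF f h] by fastforce
  moreover have "finite ((\<lambda>(g, k). g \<otimes>\<^bsub>G\<^esub> k) ` (supp f \<times> supp h))"
    using CS_fin[OF f] CS_fin[OF h] by simp
  ultimately have "finite (supp (f \<otimes>\<^bsub>S\<^esub> h))" by (rule finite_subset)
  then show ?thesis unfolding CS_iff using prod_out prod_D[OF f h] by blast
qed

lemma prod_supp_sub:
  assumes f: "f \<in> carrier S" and h: "h \<in> carrier S" and A: "supp f \<subseteq> A" and B: "supp h \<subseteq> B"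
  shows "supp (f \<otimes>\<^bsub>S\<^esub> h) \<subseteq> A <#>\<^bsub>G\<^esub> B"
proof
  fix x assume "x \<in> supp (f \<otimes>\<^bsub>S\<^esub> h)"
  then obtain g k where "g \<in> supp f" "k \<in> supp h" "x = g \<otimes>\<^bsub>G\<^esub> k" using prod_supp[OF f h] by blast
  then show "x \<in> A <#>\<^bsub>G\<^esub> B" using A B unfolding set_mult_def by blast
qed

lemma mn_CS: "r \<in> carrier R \<Longrightarrow> mn r \<in> carrier S"
proof -
  assume r: "r \<in> carrier R"
  have "supp (mn r) \<subseteq> {\<one>\<^bsub>G\<^esub>}" by (auto simp: skew_support_def mn_def)
  then have "finite (supp (mn r))" by (rule finite_subset) simp
  then show ?thesis unfolding CS_iff using r D_one D_zero by (auto simp: mn_def)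
qed

lemma mn_supp: "supp (mn r) \<subseteq> {\<one>\<^bsub>G\<^esub>}"
  by (auto simp: skew_support_def mn_def)

lemma mn_left:
  assumes r: "r \<in> carrier R" and y: "y \<in> carrier S" and z: "z \<in> carrier G"
  shows "(mn r \<otimes>\<^bsub>S\<^esub> y) z = r \<otimes>\<^bsub>R\<^esub> y z"
proof -
  have tc: "trm (mn r) y z \<in> supp (mn r) \<rightarrow> carrier R"
    using trm_in[OF mn_CS[OF r] y _ z] supp_sub D_sub[OF z] by blast
  have "(mn r \<otimes>\<^bsub>S\<^esub> y) z = (if \<one>\<^bsub>G\<^esub> \<in> supp (mn r) then trm (mn r) y z \<one>\<^bsub>G\<^esub> else \<zero>\<^bsub>R\<^esub>)"
    unfolding prod_val[OF z]
    by (rule finsum_single[OF CS_fin[OF mn_CS[OF r]] tc]) (use mn_supp in blast)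
  also have "\<dots> = r \<otimes>\<^bsub>R\<^esub> y z"
  proof (cases "\<one>\<^bsub>G\<^esub> \<in> supp (mn r)")
    case True
    have "trm (mn r) y z \<one>\<^bsub>G\<^esub> = r \<otimes>\<^bsub>R\<^esub> y z"
      unfolding trm_def using z u1_one alpha_one CS_val[OF y] by (simp add: mn_def)
    then show ?thesis using True by simp
  next
    case False
    then have "r = \<zero>\<^bsub>R\<^esub>" by (simp add: supp_iff mn_def)
    then show ?thesis using False CS_val[OF y] by simp
  qed
  finally show ?thesis .
qed

lemma mn_right:
  assumes r: "r \<in> carrier R" and y: "y \<in> carrier S" and z: "z \<in> carrier G"
  shows "(y \<otimes>\<^bsub>S\<^esub> mn r) z = y z \<otimes>\<^bsub>R\<^esub> \<alpha> z (r \<otimes>\<^bsub>R\<^esub> u1 (inv\<^bsub>G\<^esub> z))"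
proof -
  have zi: "inv\<^bsub>G\<^esub> z \<in> carrier G" using z by simp
  have tc: "trm y (mn r) z \<in> supp y \<rightarrow> carrier R"
    using trm_in[OF y mn_CS[OF r] _ z] supp_sub D_sub[OF z] by blast
  have "(y \<otimes>\<^bsub>S\<^esub> mn r) z = (if z \<in> supp y then trm y (mn r) z z else \<zero>\<^bsub>R\<^esub>)"
    unfolding prod_val[OF z]
  proof (rule finsum_single[OF CS_fin[OF y] tc])
    fix j assume j: "j \<in> supp y" "j \<noteq> z"
    have jc: "j \<in> carrier G" using j supp_iff by blast
    have "inv\<^bsub>G\<^esub> j \<otimes>\<^bsub>G\<^esub> z \<noteq> \<one>\<^bsub>G\<^esub>"
    proof
      assume "inv\<^bsub>G\<^esub> j \<otimes>\<^bsub>G\<^esub> z = \<one>\<^bsub>G\<^esub>"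
      moreover have "z = j \<otimes>\<^bsub>G\<^esub> (inv\<^bsub>G\<^esub> j \<otimes>\<^bsub>G\<^esub> z)" using jc z by (simp add: G.m_assoc[symmetric])
      ultimately have "z = j" using jc by simp
      then show False using j by simp
    qed
    then show "trm y (mn r) z j = \<zero>\<^bsub>R\<^esub>" by (intro trm_zero[OF y jc]) (simp add: mn_def)
  qed
  also have "\<dots> = y z \<otimes>\<^bsub>R\<^esub> \<alpha> z (r \<otimes>\<^bsub>R\<^esub> u1 (inv\<^bsub>G\<^esub> z))"
  proof (cases "z \<in> supp y")
    case True
    then show ?thesis unfolding trm_def using z by (simp add: mn_def)
  next
    case False
    then have "y z = \<zero>\<^bsub>R\<^esub>" using z by (simp add: supp_iff)
    moreover have "\<alpha> z (r \<otimes>\<^bsub>R\<^esub> u1 (inv\<^bsub>G\<^esub> z)) \<in> carrier R"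
      using alpha_in[OF z D_lmult[OF zi u1_in[OF zi] r]] D_sub[OF z] by blast
    ultimately show ?thesis using False by simp
  qed
  finally show ?thesis .
qed

lemma one_left: assumes y: "y \<in> carrier S" shows "\<one>\<^bsub>S\<^esub> \<otimes>\<^bsub>S\<^esub> y = y"
proof
  fix z show "(\<one>\<^bsub>S\<^esub> \<otimes>\<^bsub>S\<^esub> y) z = y z"
  proof (cases "z \<in> carrier G")
    case True then show ?thesis unfolding one_S using mn_left[OF R.one_closed y True] CS_val[OF y] by simp
  next
    case False then show ?thesis using prod_out CS_out[OF y] by simp
  qed
qed

lemma one_right: assumes y: "y \<in> carrier S" shows "y \<otimes>\<^bsub>S\<^esub> \<one>\<^bsub>S\<^esub> = y"
proof
  fix z show "(y \<otimes>\<^bsub>S\<^esub> \<one>\<^bsub>S\<^esub>) z = y z"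
  proof (cases "z \<in> carrier G")
    case True
    have zi: "inv\<^bsub>G\<^esub> z \<in> carrier G" using True by simp
    show ?thesis unfolding one_S mn_right[OF R.one_closed y True]
      using u1_carr[OF zi] alpha_u1[OF True] u1_r[OF True CS_D[OF y True]] by simp
  next
    case False then show ?thesis using prod_out CS_out[OF y] by simp
  qed
qed

lemma S_abelian: "abelian_group S"
proof (rule abelian_groupI)
  fix x y assume x: "x \<in> carrier S" and y: "y \<in> carrier S"
  have "supp (x \<oplus>\<^bsub>S\<^esub> y) \<subseteq> supp x \<union> supp y" by (auto simp: supp_iff add_S)
  then have "finite (supp (x \<oplus>\<^bsub>S\<^esub> y))" using CS_fin[OF x] CS_fin[OF y] finite_subset by blast
  then show "x \<oplus>\<^bsub>S\<^esub> y \<in> carrier S" unfolding CS_iff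
    using CS_out[OF x] CS_out[OF y] D_add CS_D[OF x] CS_D[OF y] by (simp add: add_S)
  show "x \<oplus>\<^bsub>S\<^esub> y = y \<oplus>\<^bsub>S\<^esub> x" unfolding add_S using CS_val[OF x] CS_val[OF y] R.a_comm by presburger
  show "\<exists>z\<in>carrier S. z \<oplus>\<^bsub>S\<^esub> x = \<zero>\<^bsub>S\<^esub>"
  proof
    have "supp (\<lambda>g. \<ominus>\<^bsub>R\<^esub> x g) = supp x" using CS_val[OF x] by (auto simp: supp_iff)
    then show "(\<lambda>g. \<ominus>\<^bsub>R\<^esub> x g) \<in> carrier S" unfolding CS_iff
      using CS_out[OF x] D_neg CS_D[OF x] CS_fin[OF x] by simp
    show "(\<lambda>g. \<ominus>\<^bsub>R\<^esub> x g) \<oplus>\<^bsub>S\<^esub> x = \<zero>\<^bsub>S\<^esub>" unfolding add_S zero_S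
      using CS_val[OF x] R.l_neg by presburger
  qed
next
  fix x y z assume x: "x \<in> carrier S" and y: "y \<in> carrier S" and z: "z \<in> carrier S"
  show "x \<oplus>\<^bsub>S\<^esub> y \<oplus>\<^bsub>S\<^esub> z = x \<oplus>\<^bsub>S\<^esub> (y \<oplus>\<^bsub>S\<^esub> z)" unfolding add_S
    using CS_val[OF x] CS_val[OF y] CS_val[OF z] R.a_assoc by presburger
next
  have "supp (\<lambda>g. \<zero>\<^bsub>R\<^esub>) = {}" by (simp add: skew_support_def)
  then show "\<zero>\<^bsub>S\<^esub> \<in> carrier S" unfolding CS_iff zero_S using D_zero by simp
next
  fix x assume x: "x \<in> carrier S"
  show "\<zero>\<^bsub>S\<^esub> \<oplus>\<^bsub>S\<^esub> x = x" unfolding add_S zero_S using CS_val[OF x] by simp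
qed

lemma neg_S: assumes x: "x \<in> carrier S" shows "\<ominus>\<^bsub>S\<^esub> x = (\<lambda>g. \<ominus>\<^bsub>R\<^esub> x g)"
proof (rule abelian_group.minus_equality[OF S_abelian])
  have "supp (\<lambda>g. \<ominus>\<^bsub>R\<^esub> x g) = supp x" using CS_val[OF x] by (auto simp: supp_iff)
  then show "(\<lambda>g. \<ominus>\<^bsub>R\<^esub> x g) \<in> carrier S" unfolding CS_iff
    using CS_out[OF x] D_neg CS_D[OF x] CS_fin[OF x] by simp
  show "(\<lambda>g. \<ominus>\<^bsub>R\<^esub> x g) \<oplus>\<^bsub>S\<^esub> x = \<zero>\<^bsub>S\<^esub>" unfolding add_S zero_S
    using CS_val[OF x] R.l_neg by presburger
qed fact

lemma finsum_S:
  assumes "finite A" "F \<in> A \<rightarrow> carrier S"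
  shows "finsum S F A g = finsum R (\<lambda>i. F i g) A"
  using assms
proof (induction A rule: finite_induct)
  case empty
  have "finsum S F {} = \<zero>\<^bsub>S\<^esub>" by (rule abelian_monoid.finsum_empty[OF abelian_group.axioms(1)[OF S_abelian]])
  then show ?case by (simp add: zero_S)
next
  case (insert a A)
  have Fa: "F a \<in> carrier S" and FA: "F \<in> A \<rightarrow> carrier S" using insert.prems by blast+
  have "finsum S F (insert a A) = F a \<oplus>\<^bsub>S\<^esub> finsum S F A"
    by (rule abelian_monoid.finsum_insert[OF abelian_group.axioms(1)[OF S_abelian] insert.hyps(1,2) FA Fa])
  then have "finsum S F (insert a A) g = F a g \<oplus>\<^bsub>R\<^esub> finsum S F A g" by (simp add: add_S)
  also have "\<dots> = F a g \<oplus>\<^bsub>R\<^esub> finsum R (\<lambda>i. F i g) A" using insert.IH[OF FA] by simp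
  also have "\<dots> = finsum R (\<lambda>i. F i g) (insert a A)"
    using insert.hyps FA Fa CS_val by (subst R.finsum_insert) auto
  finally show ?case .
qed

end



locale psgN = psg +
  fixes N assumes nN: "N \<lhd> G"
begin

abbreviation "H \<equiv> G Mod N"
abbreviation "T \<equiv> induced_quotient_component R G D \<alpha>"

lemma sgN: "subgroup N G" using nN normal_imp_subgroup by blast
lemma N_sub: "N \<subseteq> carrier G" using sgN subgroup.subset by blast

lemma T_iff: "f \<in> T C \<longleftrightarrow> f \<in> carrier S \<and> supp f \<subseteq> C"
  by (simp add: induced_quotient_component_def)

lemma carrH: "carrier H = rcosets\<^bsub>G\<^esub> N" by (simp add: FactGroup_def)

lemma rc_ex: "C \<in> rcosets\<^bsub>G\<^esub> N \<Longrightarrow> \<exists>a\<in>carrier G. C = N #>\<^bsub>G\<^esub> a"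
  unfolding RCOSETS_def by blast

lemma rc_sub: "C \<in> rcosets\<^bsub>G\<^esub> N \<Longrightarrow> C \<subseteq> carrier G"
  using rc_ex G.r_coset_subset_G[OF N_sub] by blast

lemma rc_eq: assumes "C \<in> rcosets\<^bsub>G\<^esub> N" "g \<in> C" shows "C = N #>\<^bsub>G\<^esub> g"
proof -
  obtain a where a: "a \<in> carrier G" "C = N #>\<^bsub>G\<^esub> a" using rc_ex[OF assms(1)] by blast
  show ?thesis using G.repr_independence[of g N a] a assms(2) sgN by simp
qed

lemma rc_self: "g \<in> carrier G \<Longrightarrow> g \<in> N #>\<^bsub>G\<^esub> g"
  using G.rcos_self sgN by blast

lemma rc_in: "g \<in> carrier G \<Longrightarrow> N #>\<^bsub>G\<^esub> g \<in> rcosets\<^bsub>G\<^esub> N"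
  using G.rcosetsI N_sub by blast

lemma N_rc: "N \<in> rcosets\<^bsub>G\<^esub> N"
  using subgroup.subgroup_in_rcosets[OF sgN] G.group_axioms by blast

lemma rc_one: assumes "C \<in> rcosets\<^bsub>G\<^esub> N" "\<one>\<^bsub>G\<^esub> \<in> C" shows "C = N"
  using rc_eq[OF assms] N_sub by simp

lemma rc_disj: assumes "C \<in> rcosets\<^bsub>G\<^esub> N" "C' \<in> rcosets\<^bsub>G\<^esub> N" "g \<in> C" "g \<in> C'" shows "C = C'"
  using rc_eq[OF assms(1,3)] rc_eq[OF assms(2,4)] by simp

lemma rc_ne1: assumes "C \<in> rcosets\<^bsub>G\<^esub> N" "C \<noteq> N" "g \<in> C" shows "g \<noteq> \<one>\<^bsub>G\<^esub>"
  using rc_one[OF assms(1)] assms(2,3) by blast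

lemma invH: "C \<in> rcosets\<^bsub>G\<^esub> N \<Longrightarrow> inv\<^bsub>H\<^esub> C = set_inv\<^bsub>G\<^esub> C"
  using normal.inv_FactGroup[OF nN] carrH by simp

lemma setinv_rc: "C \<in> rcosets\<^bsub>G\<^esub> N \<Longrightarrow> set_inv\<^bsub>G\<^esub> C \<in> rcosets\<^bsub>G\<^esub> N"
  using normal.setinv_closed[OF nN] by blast

lemma setinv_mem: "g \<in> C \<Longrightarrow> inv\<^bsub>G\<^esub> g \<in> set_inv\<^bsub>G\<^esub> C"
  unfolding SET_INV_def by blast

lemma setinv_ne: assumes C: "C \<in> rcosets\<^bsub>G\<^esub> N" "C \<noteq> N" shows "set_inv\<^bsub>G\<^esub> C \<noteq> N"
proof
  assume a: "set_inv\<^bsub>G\<^esub> C = N"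
  have "\<one>\<^bsub>G\<^esub> \<in> N" using sgN subgroup.one_closed by blast
  then obtain g where g: "g \<in> C" "\<one>\<^bsub>G\<^esub> = inv\<^bsub>G\<^esub> g" using a unfolding SET_INV_def by blast
  have gc: "g \<in> carrier G" using g rc_sub[OF C(1)] by blast
  then have "g = \<one>\<^bsub>G\<^esub>" using g(2) by (metis G.inv_inv G.inv_one)
  then show False using rc_ne1[OF C] g by blast
qed

lemma H_group: "group H" using normal.factorgroup_is_group[OF nN] .

lemma invH_N: "inv\<^bsub>H\<^esub> N = N"
proof -
  have "inv\<^bsub>H\<^esub> \<one>\<^bsub>H\<^esub> = \<one>\<^bsub>H\<^esub>" using monoid.inv_one[OF group.is_monoid[OF H_group]] .
  then show ?thesis by simp
qed

lemma invH_inv: "C \<in> carrier H \<Longrightarrow> inv\<^bsub>H\<^esub> (inv\<^bsub>H\<^esub> C) = C"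
  using group.inv_inv[OF H_group] by blast

lemma fin_nz: "finite {h \<in> carrier G. h \<noteq> \<one>\<^bsub>G\<^esub> \<and> u1 h \<noteq> \<zero>\<^bsub>R\<^esub>}" (is "finite ?A")
proof (rule finite_imageD)
  show "finite (u1 ` ?A)" using fin by (rule finite_subset[rotated]) blast
  show "inj_on u1 ?A"
  proof
    fix g h assume g: "g \<in> ?A" and h: "h \<in> ?A" and e: "u1 g = u1 h"
    show "g = h"
    proof (rule ccontr)
      assume ne: "g \<noteq> h"
      have gc: "g \<in> carrier G" and hc: "h \<in> carrier G" using g h by blast+
      have "u1 g \<otimes>\<^bsub>R\<^esub> u1 h = \<zero>\<^bsub>R\<^esub>"
        using orth0[OF gc hc ne _ _ u1_in[OF gc] u1_in[OF hc]] g h by blast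
      moreover have "u1 g \<otimes>\<^bsub>R\<^esub> u1 h = u1 h" unfolding e by (rule u1_r[OF hc u1_in[OF hc]])
      ultimately show False using h by simp
    qed
  qed
qed

definition "sC C = (\<lambda>x. if x \<in> C then u1 x else \<zero>\<^bsub>R\<^esub>)"
definition "eC C = finsum R u1 (supp (sC C))"

lemma sC_supp: "C \<in> rcosets\<^bsub>G\<^esub> N \<Longrightarrow> supp (sC C) \<subseteq> C"
  by (auto simp: skew_support_def sC_def)

lemma sC_T: assumes C: "C \<in> rcosets\<^bsub>G\<^esub> N" "C \<noteq> N" shows "sC C \<in> T C"
proof -
  have "supp (sC C) \<subseteq> {h \<in> carrier G. h \<noteq> \<one>\<^bsub>G\<^esub> \<and> u1 h \<noteq> \<zero>\<^bsub>R\<^esub>}"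
    using rc_ne1[OF C] by (auto simp: skew_support_def sC_def)
  then have "finite (supp (sC C))" using fin_nz finite_subset by blast
  moreover have "\<forall>g. g \<notin> carrier G \<longrightarrow> sC C g = \<zero>\<^bsub>R\<^esub>" using rc_sub[OF C(1)] by (auto simp: sC_def)
  moreover have "\<forall>g\<in>carrier G. sC C g \<in> D g" using u1_in D_zero by (simp add: sC_def)
  ultimately show ?thesis unfolding T_iff CS_iff using sC_supp[OF C(1)] by blast
qed

lemma sC_fin: assumes C: "C \<in> rcosets\<^bsub>G\<^esub> N" "C \<noteq> N" shows "finite (supp (sC C))"
  using sC_T[OF C] T_iff CS_fin by blast

lemma Z_u1: assumes C: "C \<in> rcosets\<^bsub>G\<^esub> N" and g: "g \<in> C" "g \<notin> supp (sC C)" shows "u1 g = \<zero>\<^bsub>R\<^esub>"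
  using g rc_sub[OF C] by (auto simp: skew_support_def sC_def)

lemma eC_carr: assumes C: "C \<in> rcosets\<^bsub>G\<^esub> N" "C \<noteq> N" shows "eC C \<in> carrier R"
  unfolding eC_def by (rule R.finsum_closed) (use u1_carr supp_sub in blast)

lemma eC_l: assumes C: "C \<in> rcosets\<^bsub>G\<^esub> N" "C \<noteq> N" and g: "g \<in> C" and y: "y \<in> D g"
  shows "eC C \<otimes>\<^bsub>R\<^esub> y = y"
proof -
  have gc: "g \<in> carrier G" using g rc_sub[OF C(1)] by blast
  have yc: "y \<in> carrier R" using y D_sub[OF gc] by blast
  have u1P: "u1 \<in> supp (sC C) \<rightarrow> carrier R" using u1_carr supp_sub by blast
  have "eC C \<otimes>\<^bsub>R\<^esub> y = finsum R (\<lambda>h. u1 h \<otimes>\<^bsub>R\<^esub> y) (supp (sC C))"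
    unfolding eC_def by (rule R.finsum_ldistr[OF sC_fin[OF C] yc u1P])
  also have "\<dots> = (if g \<in> supp (sC C) then u1 g \<otimes>\<^bsub>R\<^esub> y else \<zero>\<^bsub>R\<^esub>)"
  proof (rule finsum_single[OF sC_fin[OF C]])
    show "(\<lambda>h. u1 h \<otimes>\<^bsub>R\<^esub> y) \<in> supp (sC C) \<rightarrow> carrier R" using u1P yc by blast
    fix j assume j: "j \<in> supp (sC C)" "j \<noteq> g"
    have jC: "j \<in> C" using j sC_supp[OF C(1)] by blast
    have jc: "j \<in> carrier G" using j supp_sub by blast
    show "u1 j \<otimes>\<^bsub>R\<^esub> y = \<zero>\<^bsub>R\<^esub>"
      by (rule orth0[OF jc gc j(2) rc_ne1[OF C jC] rc_ne1[OF C g] u1_in[OF jc] y])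
  qed
  also have "\<dots> = y"
  proof (cases "g \<in> supp (sC C)")
    case True then show ?thesis using u1_l[OF gc y] by simp
  next
    case False
    then have "u1 g = \<zero>\<^bsub>R\<^esub>" using Z_u1[OF C(1) g] by blast
    then have "y = \<zero>\<^bsub>R\<^esub>" using u1_l[OF gc y] yc by simp
    then show ?thesis using u1_carr[OF gc] by simp
  qed
  finally show ?thesis .
qed

lemma eC_r: assumes C: "C \<in> rcosets\<^bsub>G\<^esub> N" "C \<noteq> N" and g: "g \<in> C" and y: "y \<in> D g"
  shows "y \<otimes>\<^bsub>R\<^esub> eC C = y"
proof -
  have gc: "g \<in> carrier G" using g rc_sub[OF C(1)] by blast
  have yc: "y \<in> carrier R" using y D_sub[OF gc] by blast
  have u1P: "u1 \<in> supp (sC C) \<rightarrow> carrier R" using u1_carr supp_sub by blast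
  have "y \<otimes>\<^bsub>R\<^esub> eC C = finsum R (\<lambda>h. y \<otimes>\<^bsub>R\<^esub> u1 h) (supp (sC C))"
    unfolding eC_def by (rule R.finsum_rdistr[OF sC_fin[OF C] yc u1P])
  also have "\<dots> = (if g \<in> supp (sC C) then y \<otimes>\<^bsub>R\<^esub> u1 g else \<zero>\<^bsub>R\<^esub>)"
  proof (rule finsum_single[OF sC_fin[OF C]])
    show "(\<lambda>h. y \<otimes>\<^bsub>R\<^esub> u1 h) \<in> supp (sC C) \<rightarrow> carrier R" using u1P yc by blast
    fix j assume j: "j \<in> supp (sC C)" "j \<noteq> g"
    have jC: "j \<in> C" using j sC_supp[OF C(1)] by blast
    have jc: "j \<in> carrier G" using j supp_sub by blast
    have ne: "g \<noteq> j" using j(2) by simp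
    show "y \<otimes>\<^bsub>R\<^esub> u1 j = \<zero>\<^bsub>R\<^esub>"
      by (rule orth0[OF gc jc ne rc_ne1[OF C g] rc_ne1[OF C jC] y u1_in[OF jc]])
  qed
  also have "\<dots> = y"
  proof (cases "g \<in> supp (sC C)")
    case True then show ?thesis using u1_r[OF gc y] by simp
  next
    case False
    then have "u1 g = \<zero>\<^bsub>R\<^esub>" using Z_u1[OF C(1) g] by blast
    then have "y = \<zero>\<^bsub>R\<^esub>" using u1_r[OF gc y] yc by simp
    then show ?thesis using u1_carr[OF gc] by simp
  qed
  finally show ?thesis .
qed

end



context psgN begin

definition "Jset C = {r \<in> carrier R. eC C \<otimes>\<^bsub>R\<^esub> r = r \<and> r \<otimes>\<^bsub>R\<^esub> eC C = r}"

lemma J_zero: assumes C: "C \<in> rcosets\<^bsub>G\<^esub> N" "C \<noteq> N" shows "\<zero>\<^bsub>R\<^esub> \<in> Jset C"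
  unfolding Jset_def using eC_carr[OF C] by simp

lemma J_add: assumes C: "C \<in> rcosets\<^bsub>G\<^esub> N" "C \<noteq> N" and a: "a \<in> Jset C" and b: "b \<in> Jset C"
  shows "a \<oplus>\<^bsub>R\<^esub> b \<in> Jset C"
  using a b eC_carr[OF C] unfolding Jset_def by (simp add: R.l_distr R.r_distr)

lemma J_D: assumes C: "C \<in> rcosets\<^bsub>G\<^esub> N" "C \<noteq> N" and g: "g \<in> C" and y: "y \<in> D g"
  shows "y \<in> Jset C"
proof -
  have gc: "g \<in> carrier G" using g rc_sub[OF C(1)] by blast
  show ?thesis unfolding Jset_def using eC_l[OF C g y] eC_r[OF C g y] y D_sub[OF gc] by blast
qed

lemma eC_J: assumes C: "C \<in> rcosets\<^bsub>G\<^esub> N" "C \<noteq> N" shows "eC C \<in> Jset C"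
  unfolding eC_def
proof (rule finsum_pred[OF sC_fin[OF C]])
  show "u1 \<in> supp (sC C) \<rightarrow> carrier R" using u1_carr supp_sub by blast
  show "\<zero>\<^bsub>R\<^esub> \<in> Jset C" by (rule J_zero[OF C])
  show "\<And>x y. x \<in> Jset C \<Longrightarrow> y \<in> Jset C \<Longrightarrow> x \<oplus>\<^bsub>R\<^esub> y \<in> Jset C" using J_add[OF C] by blast
  fix i assume i: "i \<in> supp (sC C)"
  have "i \<in> C" "i \<in> carrier G" using i sC_supp[OF C(1)] supp_sub by blast+
  then show "u1 i \<in> Jset C" using J_D[OF C] u1_in by blast
qed

lemma mn_zero: "mn \<zero>\<^bsub>R\<^esub> = \<zero>\<^bsub>S\<^esub>"
  by (auto simp: mn_def zero_S)

lemma mn_add: "mn a \<oplus>\<^bsub>S\<^esub> mn b = mn (a \<oplus>\<^bsub>R\<^esub> b)"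
  by (auto simp: mn_def add_S)

lemma mn_mn: assumes a: "a \<in> carrier R" and b: "b \<in> carrier R"
  shows "mn a \<otimes>\<^bsub>S\<^esub> mn b = mn (a \<otimes>\<^bsub>R\<^esub> b)"
proof
  fix z show "(mn a \<otimes>\<^bsub>S\<^esub> mn b) z = mn (a \<otimes>\<^bsub>R\<^esub> b) z"
  proof (cases "z \<in> carrier G")
    case True then show ?thesis unfolding mn_left[OF a mn_CS[OF b] True] using a by (simp add: mn_def)
  next
    case False
    then have "z \<noteq> \<one>\<^bsub>G\<^esub>" by auto
    then show ?thesis using prod_out[OF False] by (simp add: mn_def)
  qed
qed

lemma trm_Dg:
  assumes f: "f \<in> carrier S" and h: "h \<in> carrier S" and g: "g \<in> carrier G"
  shows "trm f h x g \<in> D g"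
proof -
  have gi: "inv\<^bsub>G\<^esub> g \<in> carrier G" using g by simp
  have "h (inv\<^bsub>G\<^esub> g \<otimes>\<^bsub>G\<^esub> x) \<otimes>\<^bsub>R\<^esub> u1 (inv\<^bsub>G\<^esub> g) \<in> D (inv\<^bsub>G\<^esub> g)"
    by (rule D_lmult[OF gi u1_in[OF gi] CS_val[OF h]])
  then have "\<alpha> g (h (inv\<^bsub>G\<^esub> g \<otimes>\<^bsub>G\<^esub> x) \<otimes>\<^bsub>R\<^esub> u1 (inv\<^bsub>G\<^esub> g)) \<in> carrier R"
    using alpha_in[OF g] D_sub[OF g] by blast
  then show ?thesis unfolding trm_def by (rule D_rmult[OF g CS_D[OF f g]])
qed

lemma T_carr: "x \<in> T C \<Longrightarrow> x \<in> carrier S" using T_iff by blast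
lemma T_supp: "x \<in> T C \<Longrightarrow> supp x \<subseteq> C" using T_iff by blast

lemma T_zero: "\<zero>\<^bsub>S\<^esub> \<in> T C"
proof -
  have "supp (\<zero>\<^bsub>S\<^esub>) = {}" by (simp add: zero_S skew_support_def)
  then show ?thesis unfolding T_iff using abelian_monoid.zero_closed[OF abelian_group.axioms(1)[OF S_abelian]] by simp
qed

lemma T_add: assumes x: "x \<in> T C" and y: "y \<in> T C" shows "x \<oplus>\<^bsub>S\<^esub> y \<in> T C"
proof -
  have "supp (x \<oplus>\<^bsub>S\<^esub> y) \<subseteq> supp x \<union> supp y" by (auto simp: skew_support_def add_S)
  then show ?thesis unfolding T_iff
    using abelian_monoid.a_closed[OF abelian_group.axioms(1)[OF S_abelian] T_carr[OF x] T_carr[OF y]] T_supp[OF x] T_supp[OF y] by blast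
qed

lemma T_neg: assumes x: "x \<in> T C" shows "\<ominus>\<^bsub>S\<^esub> x \<in> T C"
proof -
  have "supp (\<ominus>\<^bsub>S\<^esub> x) = supp x" unfolding neg_S[OF T_carr[OF x]]
    using CS_val[OF T_carr[OF x]] by (auto simp: skew_support_def)
  then show ?thesis unfolding T_iff
    using abelian_group.a_inv_closed[OF S_abelian T_carr[OF x]] T_supp[OF x] by simp
qed

lemma T_mult: assumes x: "x \<in> T C" and y: "y \<in> T C'" shows "x \<otimes>\<^bsub>S\<^esub> y \<in> T (C <#>\<^bsub>G\<^esub> C')"
  unfolding T_iff using prod_closed[OF T_carr[OF x] T_carr[OF y]]
    prod_supp_sub[OF T_carr[OF x] T_carr[OF y] T_supp[OF x] T_supp[OF y]] by blast

lemma ortho_prod: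
  assumes C: "C \<in> rcosets\<^bsub>G\<^esub> N" "C \<noteq> N" and a: "a \<in> T C" and b: "b \<in> T (set_inv\<^bsub>G\<^esub> C)"
    and x: "x \<in> carrier G" "x \<noteq> \<one>\<^bsub>G\<^esub>"
  shows "(a \<otimes>\<^bsub>S\<^esub> b) x = \<zero>\<^bsub>R\<^esub>"
proof -
  have Ci: "set_inv\<^bsub>G\<^esub> C \<in> rcosets\<^bsub>G\<^esub> N" "set_inv\<^bsub>G\<^esub> C \<noteq> N" using setinv_rc[OF C(1)] setinv_ne[OF C] by blast+
  have aS: "a \<in> carrier S" and bS: "b \<in> carrier S" using a b T_iff by blast+
  have "finsum R (trm a b x) (supp a) = finsum R (\<lambda>g. \<zero>\<^bsub>R\<^esub>) (supp a)"
  proof (rule R.finsum_cong')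
    fix g assume g: "g \<in> supp a"
    have gC: "g \<in> C" using g T_supp[OF a] by blast
    have gc: "g \<in> carrier G" using g supp_sub by blast
    have gic: "inv\<^bsub>G\<^esub> g \<in> carrier G" using gc by simp
    define k where "k = inv\<^bsub>G\<^esub> g \<otimes>\<^bsub>G\<^esub> x"
    have kc: "k \<in> carrier G" unfolding k_def using gc x by simp
    show "trm a b x g = \<zero>\<^bsub>R\<^esub>"
    proof (cases "b k = \<zero>\<^bsub>R\<^esub>")
      case True then show ?thesis using trm_zero[OF aS gc] unfolding k_def by blast
    next
      case False
      then have "k \<in> supp b" using kc supp_iff by blast
      then have kC: "k \<in> set_inv\<^bsub>G\<^esub> C" using T_supp[OF b] by blast
      have k1: "k \<noteq> \<one>\<^bsub>G\<^esub>" by (rule rc_ne1[OF Ci kC])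
      have giC: "inv\<^bsub>G\<^esub> g \<in> set_inv\<^bsub>G\<^esub> C" by (rule setinv_mem[OF gC])
      have gi1: "inv\<^bsub>G\<^esub> g \<noteq> \<one>\<^bsub>G\<^esub>" by (rule rc_ne1[OF Ci giC])
      have ne: "k \<noteq> inv\<^bsub>G\<^esub> g"
      proof
        assume "k = inv\<^bsub>G\<^esub> g"
        then have "inv\<^bsub>G\<^esub> g = inv\<^bsub>G\<^esub> g \<otimes>\<^bsub>G\<^esub> x" unfolding k_def by simp
        then show False using G.l_cancel_one'[OF gic x(1)] x(2) by simp
      qed
      have "b k \<otimes>\<^bsub>R\<^esub> u1 (inv\<^bsub>G\<^esub> g) = \<zero>\<^bsub>R\<^esub>"
        by (rule orth0[OF kc gic ne k1 gi1 CS_D[OF bS kc] u1_in[OF gic]])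
      then show ?thesis unfolding trm_def k_def[symmetric] using alpha_zero[OF gc] CS_val[OF aS] by simp
    qed
  qed simp_all
  then show ?thesis unfolding prod_val[OF x(1)] by simp
qed

abbreviation "PP C \<equiv> sum_prods S (T C) (T (set_inv\<^bsub>G\<^esub> C))"

lemma P_Q: assumes C: "C \<in> rcosets\<^bsub>G\<^esub> N" "C \<noteq> N" and p: "p \<in> PP C"
  shows "\<exists>r\<in>Jset C. p = mn r"
  using p
proof induct
  case sp_zero then show ?case using J_zero[OF C] mn_zero by metis
next
  case (sp_prod a b)
  have aS: "a \<in> carrier S" and bS: "b \<in> carrier S" using sp_prod T_iff by blast+
  have eq: "a \<otimes>\<^bsub>S\<^esub> b = mn ((a \<otimes>\<^bsub>S\<^esub> b) \<one>\<^bsub>G\<^esub>)"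
  proof
    fix x show "(a \<otimes>\<^bsub>S\<^esub> b) x = mn ((a \<otimes>\<^bsub>S\<^esub> b) \<one>\<^bsub>G\<^esub>) x"
    proof (cases "x = \<one>\<^bsub>G\<^esub>")
      case True then show ?thesis by (simp add: mn_def)
    next
      case False
      show ?thesis
      proof (cases "x \<in> carrier G")
        case True then show ?thesis using ortho_prod[OF C sp_prod(1,2) True False] False by (simp add: mn_def)
      next
        case F2: False then show ?thesis using prod_out[OF F2] False by (simp add: mn_def)
      qed
    qed
  qed
  have "(a \<otimes>\<^bsub>S\<^esub> b) \<one>\<^bsub>G\<^esub> \<in> Jset C"
    unfolding prod_val[OF G.one_closed]
  proof (rule finsum_pred[OF CS_fin[OF aS]])
    show "trm a b \<one>\<^bsub>G\<^esub> \<in> supp a \<rightarrow> carrier R"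
      using trm_Dg[OF aS bS] supp_sub D_sub by blast
    show "\<zero>\<^bsub>R\<^esub> \<in> Jset C" by (rule J_zero[OF C])
    show "\<And>x y. x \<in> Jset C \<Longrightarrow> y \<in> Jset C \<Longrightarrow> x \<oplus>\<^bsub>R\<^esub> y \<in> Jset C" using J_add[OF C] by blast
    fix g assume g: "g \<in> supp a"
    have gC: "g \<in> C" using g T_supp[OF sp_prod(1)] by blast
    have gc: "g \<in> carrier G" using g supp_sub by blast
    show "trm a b \<one>\<^bsub>G\<^esub> g \<in> Jset C" by (rule J_D[OF C gC trm_Dg[OF aS bS gc]])
  qed
  then show ?case using eq by blast
next
  case (sp_add x y)
  then obtain r r' where "r \<in> Jset C" "x = mn r" "r' \<in> Jset C" "y = mn r'" by blast
  then show ?case using J_add[OF C] mn_add by metis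
qed

lemma sC_prod: assumes C: "C \<in> rcosets\<^bsub>G\<^esub> N" "C \<noteq> N"
  shows "sC C \<otimes>\<^bsub>S\<^esub> sC (set_inv\<^bsub>G\<^esub> C) = mn (eC C)"
proof
  have Ci: "set_inv\<^bsub>G\<^esub> C \<in> rcosets\<^bsub>G\<^esub> N" "set_inv\<^bsub>G\<^esub> C \<noteq> N" using setinv_rc[OF C(1)] setinv_ne[OF C] by blast+
  fix x show "(sC C \<otimes>\<^bsub>S\<^esub> sC (set_inv\<^bsub>G\<^esub> C)) x = mn (eC C) x"
  proof (cases "x = \<one>\<^bsub>G\<^esub>")
    case True
    have "finsum R (trm (sC C) (sC (set_inv\<^bsub>G\<^esub> C)) \<one>\<^bsub>G\<^esub>) (supp (sC C)) = finsum R u1 (supp (sC C))"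
    proof (rule R.finsum_cong')
      show "u1 \<in> supp (sC C) \<rightarrow> carrier R" using u1_carr supp_sub by blast
      fix g assume g: "g \<in> supp (sC C)"
      have gC: "g \<in> C" using g sC_supp[OF C(1)] by blast
      have gc: "g \<in> carrier G" using g supp_sub by blast
      have gic: "inv\<^bsub>G\<^esub> g \<in> carrier G" using gc by simp
      have giC: "inv\<^bsub>G\<^esub> g \<in> set_inv\<^bsub>G\<^esub> C" by (rule setinv_mem[OF gC])
      have e1: "inv\<^bsub>G\<^esub> g \<otimes>\<^bsub>G\<^esub> \<one>\<^bsub>G\<^esub> = inv\<^bsub>G\<^esub> g" using gic by simp
      have "trm (sC C) (sC (set_inv\<^bsub>G\<^esub> C)) \<one>\<^bsub>G\<^esub> g = u1 g \<otimes>\<^bsub>R\<^esub> \<alpha> g (u1 (inv\<^bsub>G\<^esub> g) \<otimes>\<^bsub>R\<^esub> u1 (inv\<^bsub>G\<^esub> g))"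
        unfolding trm_def e1 using gC giC by (simp add: sC_def)
      also have "\<dots> = u1 g \<otimes>\<^bsub>R\<^esub> \<alpha> g (u1 (inv\<^bsub>G\<^esub> g))" using u1_r[OF gic u1_in[OF gic]] by simp
      also have "\<dots> = u1 g" using alpha_u1[OF gc] u1_r[OF gc u1_in[OF gc]] by simp
      finally show "trm (sC C) (sC (set_inv\<^bsub>G\<^esub> C)) \<one>\<^bsub>G\<^esub> g = u1 g" .
    qed simp
    then show ?thesis unfolding True prod_val[OF G.one_closed] eC_def by (simp add: mn_def)
  next
    case False
    show ?thesis
    proof (cases "x \<in> carrier G")
      case True then show ?thesis using ortho_prod[OF C sC_T[OF C] _ True False] sC_T[OF Ci] False
        by (simp add: mn_def)
    next
      case F2: False then show ?thesis using prod_out[OF F2] False by (simp add: mn_def)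
    qed
  qed
qed

lemma mi_C: assumes C: "C \<in> rcosets\<^bsub>G\<^esub> N" "C \<noteq> N"
  shows "is_mult_identity S (PP C) (mn (eC C))"
  unfolding is_mult_identity_def
proof (intro conjI ballI)
  have Ci: "set_inv\<^bsub>G\<^esub> C \<in> rcosets\<^bsub>G\<^esub> N" "set_inv\<^bsub>G\<^esub> C \<noteq> N" using setinv_rc[OF C(1)] setinv_ne[OF C] by blast+
  show "mn (eC C) \<in> PP C" using sp_prod[where S=S, OF sC_T[OF C] sC_T[OF Ci]] sC_prod[OF C] by simp
  fix p assume "p \<in> PP C"
  then obtain r where r: "r \<in> Jset C" "p = mn r" using P_Q[OF C] by blast
  have rc: "r \<in> carrier R" using r unfolding Jset_def by blast
  have e: "eC C \<otimes>\<^bsub>R\<^esub> r = r" "r \<otimes>\<^bsub>R\<^esub> eC C = r" using r unfolding Jset_def by blast+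
  show "mn (eC C) \<otimes>\<^bsub>S\<^esub> p = p" using mn_mn[OF eC_carr[OF C] rc] e r by simp
  show "p \<otimes>\<^bsub>S\<^esub> mn (eC C) = p" using mn_mn[OF rc eC_carr[OF C]] e r by simp
qed

lemma strong_C: assumes C: "C \<in> rcosets\<^bsub>G\<^esub> N" "C \<noteq> N"
  shows "sum_prods S (PP C) (T C) = T C"
proof
  show "sum_prods S (PP C) (T C) \<subseteq> T C"
  proof
    fix x assume "x \<in> sum_prods S (PP C) (T C)"
    then show "x \<in> T C"
    proof induct
      case sp_zero then show ?case by (rule T_zero)
    next
      case (sp_prod p t)
      obtain r where r: "r \<in> Jset C" "p = mn r" using P_Q[OF C sp_prod(1)] by blast
      have rc: "r \<in> carrier R" using r unfolding Jset_def by blast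
      have tS: "t \<in> carrier S" using T_carr[OF sp_prod(2)] .
      have "supp (mn r \<otimes>\<^bsub>S\<^esub> t) \<subseteq> supp t"
      proof
        fix z assume z: "z \<in> supp (mn r \<otimes>\<^bsub>S\<^esub> t)"
        then have zc: "z \<in> carrier G" using supp_iff by blast
        have "r \<otimes>\<^bsub>R\<^esub> t z \<noteq> \<zero>\<^bsub>R\<^esub>" using z mn_left[OF rc tS zc] supp_iff by simp
        then have "t z \<noteq> \<zero>\<^bsub>R\<^esub>" using rc by auto
        then show "z \<in> supp t" using zc supp_iff by blast
      qed
      then show ?case unfolding T_iff using prod_closed[OF mn_CS[OF rc] tS] T_supp[OF sp_prod(2)] r by blast
    next
      case (sp_add x y) then show ?case using T_add by blast
    qed
  qed
  show "T C \<subseteq> sum_prods S (PP C) (T C)"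
  proof
    fix t assume t: "t \<in> T C"
    have tS: "t \<in> carrier S" using T_carr[OF t] .
    have eq: "mn (eC C) \<otimes>\<^bsub>S\<^esub> t = t"
    proof
      fix z show "(mn (eC C) \<otimes>\<^bsub>S\<^esub> t) z = t z"
      proof (cases "z \<in> carrier G")
        case True
        show ?thesis unfolding mn_left[OF eC_carr[OF C] tS True]
        proof (cases "z \<in> C")
          case True2: True then show "eC C \<otimes>\<^bsub>R\<^esub> t z = t z" using eC_l[OF C True2 CS_D[OF tS True]] by simp
        next
          case False
          then have "t z = \<zero>\<^bsub>R\<^esub>" using T_supp[OF t] True supp_iff by blast
          then show "eC C \<otimes>\<^bsub>R\<^esub> t z = t z" using eC_carr[OF C] by simp
        qed
      next
        case False then show ?thesis using prod_out[OF False] CS_out[OF tS False] by simp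
      qed
    qed
    have u: "mn (eC C) \<in> PP C" using mi_C[OF C] unfolding is_mult_identity_def by (rule conjunct1)
    have "mn (eC C) \<otimes>\<^bsub>S\<^esub> t \<in> sum_prods S (PP C) (T C)" by (rule sp_prod[OF u t])
    then show "t \<in> sum_prods S (PP C) (T C)" unfolding eq .
  qed
qed

end



context psgN begin

lemma one_T: "\<one>\<^bsub>S\<^esub> \<in> T N"
  unfolding T_iff one_S using mn_CS[OF R.one_closed] mn_supp sgN subgroup.one_closed by blast

lemma NN: "N <#>\<^bsub>G\<^esub> N = N" by (rule G.subgroup_mult_id[OF sgN])

lemma PN_T: "p \<in> sum_prods S (T N) (T N) \<Longrightarrow> p \<in> T N"
proof (induct rule: sum_prods.induct)
  case sp_zero then show ?case by (rule T_zero)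
next
  case (sp_prod a b) then show ?case using T_mult[of a N b N] NN by simp
next
  case (sp_add x y) then show ?case using T_add by blast
qed

lemma mi_N: "is_mult_identity S (sum_prods S (T N) (T N)) \<one>\<^bsub>S\<^esub>"
  unfolding is_mult_identity_def
proof (intro conjI ballI)
  have "\<one>\<^bsub>S\<^esub> \<otimes>\<^bsub>S\<^esub> \<one>\<^bsub>S\<^esub> \<in> sum_prods S (T N) (T N)" by (rule sp_prod[OF one_T one_T])
  then show "\<one>\<^bsub>S\<^esub> \<in> sum_prods S (T N) (T N)" using one_left[OF T_carr[OF one_T]] by simp
  fix p assume "p \<in> sum_prods S (T N) (T N)"
  then have pS: "p \<in> carrier S" using PN_T T_carr by blast
  show "\<one>\<^bsub>S\<^esub> \<otimes>\<^bsub>S\<^esub> p = p" by (rule one_left[OF pS])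
  show "p \<otimes>\<^bsub>S\<^esub> \<one>\<^bsub>S\<^esub> = p" by (rule one_right[OF pS])
qed

lemma strong_N: "sum_prods S (sum_prods S (T N) (T N)) (T N) = T N"
proof
  show "sum_prods S (sum_prods S (T N) (T N)) (T N) \<subseteq> T N"
  proof
    fix x assume "x \<in> sum_prods S (sum_prods S (T N) (T N)) (T N)"
    then show "x \<in> T N"
    proof induct
      case sp_zero then show ?case by (rule T_zero)
    next
      case (sp_prod a b) then show ?case using T_mult[OF PN_T[OF sp_prod(1)] sp_prod(2)] NN by simp
    next
      case (sp_add x y) then show ?case using T_add by blast
    qed
  qed
  show "T N \<subseteq> sum_prods S (sum_prods S (T N) (T N)) (T N)"
  proof
    fix t assume t: "t \<in> T N"
    have u: "\<one>\<^bsub>S\<^esub> \<in> sum_prods S (T N) (T N)" using mi_N unfolding is_mult_identity_def by (rule conjunct1)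
    have "\<one>\<^bsub>S\<^esub> \<otimes>\<^bsub>S\<^esub> t \<in> sum_prods S (sum_prods S (T N) (T N)) (T N)" by (rule sp_prod[OF u t])
    then show "t \<in> sum_prods S (sum_prods S (T N) (T N)) (T N)" using one_left[OF T_carr[OF t]] by simp
  qed
qed

definition "rs s C = (\<lambda>g. if g \<in> C then s g else \<zero>\<^bsub>R\<^esub>)"
definition "XX s = (\<lambda>C. if C \<in> carrier H then rs s C else \<zero>\<^bsub>S\<^esub>)"

lemma rs_T: assumes s: "s \<in> carrier S" and C: "C \<in> rcosets\<^bsub>G\<^esub> N" shows "rs s C \<in> T C"
proof -
  have "supp (rs s C) \<subseteq> supp s" by (auto simp: skew_support_def rs_def)
  then have "finite (supp (rs s C))" using CS_fin[OF s] finite_subset by blast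
  moreover have "supp (rs s C) \<subseteq> C" by (auto simp: skew_support_def rs_def)
  moreover have "\<forall>g. g \<notin> carrier G \<longrightarrow> rs s C g = \<zero>\<^bsub>R\<^esub>" using rc_sub[OF C] by (auto simp: rs_def)
  moreover have "\<forall>g\<in>carrier G. rs s C g \<in> D g" using CS_D[OF s] D_zero by (simp add: rs_def)
  ultimately show ?thesis unfolding T_iff CS_iff by blast
qed

lemma XX_T: "s \<in> carrier S \<Longrightarrow> C \<in> carrier H \<Longrightarrow> XX s C \<in> T C"
  using rs_T carrH by (simp add: XX_def)

lemma XX_fin: assumes s: "s \<in> carrier S" shows "finite {C \<in> carrier H. XX s C \<noteq> \<zero>\<^bsub>S\<^esub>}"
proof -
  have "{C \<in> carrier H. XX s C \<noteq> \<zero>\<^bsub>S\<^esub>} \<subseteq> (\<lambda>g. N #>\<^bsub>G\<^esub> g) ` supp s"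
  proof
    fix C assume C: "C \<in> {C \<in> carrier H. XX s C \<noteq> \<zero>\<^bsub>S\<^esub>}"
    then have Cr: "C \<in> rcosets\<^bsub>G\<^esub> N" using carrH by simp
    have CH: "C \<in> carrier H" and X: "XX s C \<noteq> \<zero>\<^bsub>S\<^esub>" using C by blast+
    have "rs s C \<noteq> (\<lambda>g. \<zero>\<^bsub>R\<^esub>)" using CH X by (simp add: XX_def zero_S)
    then obtain g where "rs s C g \<noteq> \<zero>\<^bsub>R\<^esub>" by blast
    then have g: "g \<in> C" "s g \<noteq> \<zero>\<^bsub>R\<^esub>" by (auto simp: rs_def split: if_splits)
    then have "g \<in> supp s" using rc_sub[OF Cr] supp_iff by blast
    moreover have "C = N #>\<^bsub>G\<^esub> g" by (rule rc_eq[OF Cr g(1)])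
    ultimately show "C \<in> (\<lambda>g. N #>\<^bsub>G\<^esub> g) ` supp s" by blast
  qed
  then show ?thesis using CS_fin[OF s] finite_subset by blast
qed

lemma XX_sum: assumes s: "s \<in> carrier S"
  shows "s = finsum S (XX s) {C \<in> carrier H. XX s C \<noteq> \<zero>\<^bsub>S\<^esub>}" (is "_ = finsum S _ ?A")
proof
  fix g
  have XP: "XX s \<in> ?A \<rightarrow> carrier S" using XX_T[OF s] T_carr by blast
  have "finsum S (XX s) ?A g = finsum R (\<lambda>C. XX s C g) ?A" by (rule finsum_S[OF XX_fin[OF s] XP])
  also have "\<dots> = s g"
  proof (cases "g \<in> carrier G")
    case True
    have i: "N #>\<^bsub>G\<^esub> g \<in> carrier H" using rc_in[OF True] carrH by simp
    have gi: "g \<in> N #>\<^bsub>G\<^esub> g" by (rule rc_self[OF True])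
    have "finsum R (\<lambda>C. XX s C g) ?A = (if N #>\<^bsub>G\<^esub> g \<in> ?A then XX s (N #>\<^bsub>G\<^esub> g) g else \<zero>\<^bsub>R\<^esub>)"
    proof (rule finsum_single[OF XX_fin[OF s]])
      show "(\<lambda>C. XX s C g) \<in> ?A \<rightarrow> carrier R" using XP CS_val by blast
      fix j assume j: "j \<in> ?A" "j \<noteq> N #>\<^bsub>G\<^esub> g"
      have jr: "j \<in> rcosets\<^bsub>G\<^esub> N" using j carrH by simp
      have "g \<notin> j" using rc_eq[OF jr] j(2) by blast
      then show "XX s j g = \<zero>\<^bsub>R\<^esub>" using j by (simp add: XX_def rs_def)
    qed
    also have "\<dots> = s g"
    proof (cases "N #>\<^bsub>G\<^esub> g \<in> ?A")
      case True then show ?thesis using i gi by (simp add: XX_def rs_def)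
    next
      case False
      then have "XX s (N #>\<^bsub>G\<^esub> g) = \<zero>\<^bsub>S\<^esub>" using i by blast
      then have "XX s (N #>\<^bsub>G\<^esub> g) g = \<zero>\<^bsub>R\<^esub>" by (simp add: zero_S)
      then show ?thesis using False i gi by (simp add: XX_def rs_def)
    qed
    finally show ?thesis .
  next
    case False
    have "finsum R (\<lambda>C. XX s C g) ?A = finsum R (\<lambda>C. \<zero>\<^bsub>R\<^esub>) ?A"
    proof (rule R.finsum_cong')
      fix C assume "C \<in> ?A"
      then have "C \<in> rcosets\<^bsub>G\<^esub> N" using carrH by simp
      then have "g \<notin> C" using rc_sub False by blast
      then show "XX s C g = \<zero>\<^bsub>R\<^esub>" by (simp add: XX_def rs_def zero_S)
    qed simp_all
    then show ?thesis using CS_out[OF s False] by simp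
  qed
  finally show "s g = finsum S (XX s) ?A g" by simp
qed

lemma XX_unique: assumes s: "s \<in> carrier S"
  and y0: "\<forall>h. h \<notin> carrier H \<longrightarrow> y h = \<zero>\<^bsub>S\<^esub>" and y1: "\<forall>h\<in>carrier H. y h \<in> T h"
  and y2: "finite {h \<in> carrier H. y h \<noteq> \<zero>\<^bsub>S\<^esub>}"
  and y3: "s = finsum S y {h \<in> carrier H. y h \<noteq> \<zero>\<^bsub>S\<^esub>}"
  shows "y = XX s"
proof
  fix C
  let ?A = "{h \<in> carrier H. y h \<noteq> \<zero>\<^bsub>S\<^esub>}"
  show "y C = XX s C"
  proof (cases "C \<in> carrier H")
    case False then show ?thesis using y0 by (simp add: XX_def)
  next
    case CH: True
    have Cr: "C \<in> rcosets\<^bsub>G\<^esub> N" using CH carrH by simp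
    have yP: "y \<in> ?A \<rightarrow> carrier S" using y1 T_carr by blast
    show ?thesis
    proof
      fix g show "y C g = XX s C g"
      proof (cases "g \<in> C")
        case True
        have gc: "g \<in> carrier G" using True rc_sub[OF Cr] by blast
        have "s g = finsum R (\<lambda>C'. y C' g) ?A" using finsum_S[OF y2 yP] y3 by metis
        also have "\<dots> = (if C \<in> ?A then y C g else \<zero>\<^bsub>R\<^esub>)"
        proof (rule finsum_single[OF y2])
          show "(\<lambda>C'. y C' g) \<in> ?A \<rightarrow> carrier R" using yP CS_val by blast
          fix j assume j: "j \<in> ?A" "j \<noteq> C"
          have jr: "j \<in> rcosets\<^bsub>G\<^esub> N" using j carrH by simp
          have "g \<notin> j" using rc_disj[OF Cr jr True] j(2) by blast
          then have "g \<notin> supp (y j)" using y1 j T_supp by blast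
          then show "y j g = \<zero>\<^bsub>R\<^esub>" using gc supp_iff by blast
        qed
        also have "\<dots> = y C g" using CH by (auto simp: zero_S)
        finally show ?thesis using True CH by (simp add: XX_def rs_def)
      next
        case False
        have "y C g = \<zero>\<^bsub>R\<^esub>"
        proof (cases "g \<in> carrier G")
          case True
          have "g \<notin> supp (y C)" using y1 CH T_supp False by blast
          then show ?thesis using True supp_iff by blast
        next
          case F2: False then show ?thesis using CS_out[OF T_carr] y1 CH by blast
        qed
        then show ?thesis using False CH by (simp add: XX_def rs_def)
      qed
    qed
  qed
qed

lemma grading: "is_grading S H T"
  unfolding is_grading_def
proof (intro conjI ballI)
  fix C assume "C \<in> carrier H"
  show "T C \<subseteq> carrier S" using T_carr by blast
  show "\<zero>\<^bsub>S\<^esub> \<in> T C" by (rule T_zero)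
  fix x y assume "x \<in> T C" "y \<in> T C"
  then show "x \<oplus>\<^bsub>S\<^esub> y \<in> T C" "\<ominus>\<^bsub>S\<^esub> x \<in> T C" using T_add T_neg by blast+
next
  fix C C' x y assume "C \<in> carrier H" "C' \<in> carrier H" "x \<in> T C" "y \<in> T C'"
  then show "x \<otimes>\<^bsub>S\<^esub> y \<in> T (C \<otimes>\<^bsub>H\<^esub> C')" using T_mult by simp
next
  fix s assume s: "s \<in> carrier S"
  show "\<exists>!x. (\<forall>h. h \<notin> carrier H \<longrightarrow> x h = \<zero>\<^bsub>S\<^esub>) \<and> (\<forall>h\<in>carrier H. x h \<in> T h) \<and>
        finite {h \<in> carrier H. x h \<noteq> \<zero>\<^bsub>S\<^esub>} \<and>
        s = (\<Oplus>\<^bsub>S\<^esub> h\<in>{h \<in> carrier H. x h \<noteq> \<zero>\<^bsub>S\<^esub>}. x h)"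
  proof (rule ex1I[of _ "XX s"])
    show "(\<forall>h. h \<notin> carrier H \<longrightarrow> XX s h = \<zero>\<^bsub>S\<^esub>) \<and> (\<forall>h\<in>carrier H. XX s h \<in> T h) \<and>
        finite {h \<in> carrier H. XX s h \<noteq> \<zero>\<^bsub>S\<^esub>} \<and>
        s = (\<Oplus>\<^bsub>S\<^esub> h\<in>{h \<in> carrier H. XX s h \<noteq> \<zero>\<^bsub>S\<^esub>}. XX s h)"
      using XX_T[OF s] XX_fin[OF s] XX_sum[OF s] by (simp add: XX_def)
    fix y assume "(\<forall>h. h \<notin> carrier H \<longrightarrow> y h = \<zero>\<^bsub>S\<^esub>) \<and> (\<forall>h\<in>carrier H. y h \<in> T h) \<and>
        finite {h \<in> carrier H. y h \<noteq> \<zero>\<^bsub>S\<^esub>} \<and>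
        s = (\<Oplus>\<^bsub>S\<^esub> h\<in>{h \<in> carrier H. y h \<noteq> \<zero>\<^bsub>S\<^esub>}. y h)"
    then show "y = XX s" using XX_unique[OF s] by blast
  qed
qed

lemma setinv_inv: assumes C: "C \<in> rcosets\<^bsub>G\<^esub> N" shows "set_inv\<^bsub>G\<^esub> (set_inv\<^bsub>G\<^esub> C) = C"
proof -
  have "inv\<^bsub>H\<^esub> (inv\<^bsub>H\<^esub> C) = C" using invH_inv C carrH by simp
  then show ?thesis using invH[OF C] invH[OF setinv_rc[OF C]] by simp
qed

lemma main: "epsilon_crossed_product S H T"
  unfolding epsilon_crossed_product_def epsilon_strong_def
proof (intro conjI ballI)
  show "is_grading S H T" by (rule grading)
next
  fix C assume CH: "C \<in> carrier H"
  have Cr: "C \<in> rcosets\<^bsub>G\<^esub> N" using CH carrH by simp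
  show "sum_prods S (sum_prods S (T C) (T (inv\<^bsub>H\<^esub> C))) (T C) = T C"
  proof (cases "C = N")
    case True then show ?thesis using strong_N invH_N by simp
  next
    case False then show ?thesis using strong_C[OF Cr False] invH[OF Cr] by simp
  qed
  show "\<exists>u. is_mult_identity S (sum_prods S (T C) (T (inv\<^bsub>H\<^esub> C))) u"
  proof (cases "C = N")
    case True then show ?thesis using mi_N invH_N by auto
  next
    case False then show ?thesis using mi_C[OF Cr False] invH[OF Cr] by auto
  qed
next
  fix C assume CH: "C \<in> carrier H"
  have Cr: "C \<in> rcosets\<^bsub>G\<^esub> N" using CH carrH by simp
  show "\<exists>s. epsilon_invertible S H T C s"
  proof (cases "C = N")
    case True
    have eu: "epsilon_unit S H T N = \<one>\<^bsub>S\<^esub>"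
      unfolding epsilon_unit_def invH_N by (rule mi_eq[OF mi_N])
    have "epsilon_invertible S H T N \<one>\<^bsub>S\<^esub>"
      unfolding epsilon_invertible_def invH_N eu using one_T one_left[OF T_carr[OF one_T]] by blast
    then show ?thesis using True by blast
  next
    case False
    let ?C' = "set_inv\<^bsub>G\<^esub> C"
    have Ci: "?C' \<in> rcosets\<^bsub>G\<^esub> N" "?C' \<noteq> N" using setinv_rc[OF Cr] setinv_ne[OF Cr False] by blast+
    have e1: "inv\<^bsub>H\<^esub> C = ?C'" by (rule invH[OF Cr])
    have e2: "inv\<^bsub>H\<^esub> ?C' = C" using invH[OF Ci(1)] setinv_inv[OF Cr] by simp
    have eu1: "epsilon_unit S H T C = mn (eC C)"
      unfolding epsilon_unit_def e1 by (rule mi_eq[OF mi_C[OF Cr False]])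
    have eu2: "epsilon_unit S H T ?C' = mn (eC ?C')"
      unfolding epsilon_unit_def invH[OF Ci(1)] by (rule mi_eq[OF mi_C[OF Ci]])
    have p2: "sC ?C' \<otimes>\<^bsub>S\<^esub> sC C = mn (eC ?C')" using sC_prod[OF Ci] setinv_inv[OF Cr] by simp
    have "epsilon_invertible S H T C (sC C)"
      unfolding epsilon_invertible_def e1
    proof (rule conjI[OF sC_T[OF Cr False]], rule bexI[OF _ sC_T[OF Ci]], rule conjI)
      show "sC C \<otimes>\<^bsub>S\<^esub> sC ?C' = epsilon_unit S H T C" using sC_prod[OF Cr False] eu1 by simp
      show "sC ?C' \<otimes>\<^bsub>S\<^esub> sC C = epsilon_unit S H T ?C'" using p2 eu2 by simp
    qed
    then show ?thesis by blast
  qed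
qed

end




theorem proposition8p3:
  fixes G :: "('g, 'b) monoid_scheme" and R :: "('r, 'c) ring_scheme"
    and D :: "'g \<Rightarrow> 'r set" and \<alpha> :: "'g \<Rightarrow> 'r \<Rightarrow> 'r"
  assumes "group G" and "ring R"
    and "unital_partial_action G R D \<alpha>"
    and "\<forall>g\<in>carrier G. \<forall>h\<in>carrier G. g \<noteq> h \<and> g \<noteq> \<one>\<^bsub>G\<^esub> \<and> h \<noteq> \<one>\<^bsub>G\<^esub>
           \<longrightarrow> sum_prods R (D g) (D h) = {\<zero>\<^bsub>R\<^esub>}"
    and "finite (unit_of_ideal R D ` carrier G)"
  shows "\<forall>N. N \<lhd> G \<longrightarrow>
           epsilon_crossed_product (partial_skew_group_ring R G D \<alpha>) (G Mod N)
             (induced_quotient_component R G D \<alpha>)"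
  proof (intro allI impI)
  fix N assume N: "N \<lhd> G"
  have "psgN G R D \<alpha> N"
    unfolding psgN_def psg_def psg_axioms_def psgN_axioms_def by (intro conjI assms N)
  then interpret P: psgN G R D \<alpha> N .
  show "epsilon_crossed_product (partial_skew_group_ring R G D \<alpha>) (G Mod N)
             (induced_quotient_component R G D \<alpha>)" by (rule P.main)
qed

end
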